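(* Let $\mathcal H^{gen}$ be a set of measurable functions $G\colon[0,1]^d\to\mathbb R^d$ such that $G_{\#}\lambda$ is absolutely continuous with respect to Lebesgue measure for each $G\in\mathcal H^{gen}$, and let $\mathcal H^{dis}$ be a set of measurable functions $D\colon\mathbb R^d\to[0,1]$. Let $\hat G_n=\hat G_n(\omega)\in\mathcal H^{gen}$, $n\in\mathbb N$, $\omega\in\Omega$, be a random sequence of generators. Let $$\Delta_G=\inf_{G\in\mathcal H^{gen}}d_{JS}(\mu^*,G_{\#}\lambda),\qquad \Delta_D=\sup_{G\in\mathcal H^{gen}}\Big\{L(G,D_G)-\sup_{D\in\mathcal H^{dis}}L(G,D)\Big\},$$ $$\Delta_S(n)=\sup_{G\in\mathcal H^{gen},D\in\mathcal H^{dis}}|L(G,D)-\hat L_n(G,D)|,\qquad \Delta_T(n)=\sup_{D\in\mathcal H^{dis}}\hat L_n(\hat G_n,D)-\inf_{G\in\mathcal H^{gen}}\sup_{D\in\mathcal H^{dis}}\hat L_n(G,D).$$ Then for all $n\in\mathbb N$, almost surely, $$d_{JS}(\mu^*,(\hat G_n)_{\#}\lambda)\le\Delta_T(n)+\Delta_D+2\Delta_S(n)+\Delta_G.$$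
   Context: Let $d\in\mathbb N$. $\lambda$ is the restriction of $d$-dimensional Lebesgue measure to $[0,1]^d$; $G_{\#}\lambda$ is the pushforward of $\lambda$ under $G$. $\mu^*$ is a probability measure on $[0,1]^d$ with Lebesgue density $p^*$ satisfying $p^*(x)>0$ for $x\in[0,1]^d$ and $p^*(x)=0$ for $x\notin[0,1]^d$. On a probability space $(\Omega,\mathcal F,\mathbb P)$, $Y,Y_1,Y_2,\dots$ are i.i.d. $[0,1]^d$-valued random variables with law $\mu^*$ and $Z,Z_1,Z_2,\dots$ are i.i.d. $[0,1]^d$-valued random variables with law $\lambda$. For measurable $G\colon[0,1]^d\to\mathbb R^d$ and $D\colon\mathbb R^d\to[0,1]$, $L(G,D)=\frac12\mathbb E[\log D(Y)+\log(1-D(G(Z)))]$ and $\hat L_n(G,D)=\frac1{2n}\sum_{i=1}^n\log D(Y_i)+\frac1{2n}\sum_{i=1}^n\log(1-D(G(Z_i)))$ (both may take the value $-\infty$). For $G$ with $G_{\#}\lambda$ having Lebesgue density $p$, $D_G\colon\mathbb R^d\to[0,1]$ is defined by $D_G(x)=\frac{p^*(x)}{p^*(x)+p(x)}$ for $x\in[0,1]^d$ and $D_G(x)=0$ for $x\notin[0,1]^d$. The Kullback–Leibler divergence is $d_{KL}(\nu\Vert\mu)=\int\log(\frac{d\nu}{d\mu})d\nu$ and the Jensen–Shannon divergence is $d_{JS}(\nu,\mu)=\frac12\big(d_{KL}(\nu\Vert\frac{\mu+\nu}2)+d_{KL}(\mu\Vert\frac{\mu+\nu}2)\big)$. *)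

theory Defs
  imports "HOL-Probability.Probability"
begin

definition unit_cube :: "'a::euclidean_space set" where
  "unit_cube = cbox 0 One"

definition lam :: "'a::euclidean_space measure" where
  "lam = restrict_space lborel unit_cube"

definition nlog :: "real \<Rightarrow> ennreal" where
  "nlog x = (if x > 0 then ennreal (- ln x) else \<infinity>)"

definition elog :: "real \<Rightarrow> ereal" where
  "elog x = (if x > 0 then ereal (ln x) else -\<infinity>)"

text \<open>Population loss L(G,D) = 1/2 E[log D(Y) + log(1 - D(G(Z)))], Y ~ mu, Z ~ lambda.\<close>
definition Lpop :: "'a::euclidean_space measure \<Rightarrow> ('a \<Rightarrow> 'a) \<Rightarrow> ('a \<Rightarrow> real) \<Rightarrow> ereal" where
  "Lpop mu G D = - ereal (1/2) *
     enn2ereal ((\<integral>\<^sup>+ y. nlog (D y) \<partial>mu) + (\<integral>\<^sup>+ z. nlog (1 - D (G z)) \<partial>lam))"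

definition Lemp :: "(nat \<Rightarrow> 'b \<Rightarrow> 'a) \<Rightarrow> (nat \<Rightarrow> 'b \<Rightarrow> 'a) \<Rightarrow> nat \<Rightarrow> 'b
                     \<Rightarrow> ('a \<Rightarrow> 'a) \<Rightarrow> ('a \<Rightarrow> real) \<Rightarrow> ereal" where
  "Lemp Ys Zs n w G D =
     ereal (1 / (2 * real n)) * (\<Sum>i\<in>{1..n}. elog (D (Ys i w)))
   + ereal (1 / (2 * real n)) * (\<Sum>i\<in>{1..n}. elog (1 - D (G (Zs i w))))"

definition gen_density :: "('a::euclidean_space \<Rightarrow> 'a) \<Rightarrow> 'a \<Rightarrow> real" where
  "gen_density G x = enn2real (RN_deriv lborel (distr lam lborel G) x)"

definition DG :: "('a::euclidean_space \<Rightarrow> real) \<Rightarrow> ('a \<Rightarrow> 'a) \<Rightarrow> 'a \<Rightarrow> real" where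
  "DG p G x = (if x \<in> unit_cube then p x / (p x + gen_density G x) else 0)"

definition mix :: "'a measure \<Rightarrow> 'a measure \<Rightarrow> 'a measure" where
  "mix M N = measure_of (space M) (sets M) (\<lambda>A. (emeasure M A + emeasure N A) / 2)"

text \<open>Jensen-Shannon divergence (natural logarithm). KL_divergence b M N is d_KL(N || M).\<close>
definition JS :: "'a measure \<Rightarrow> 'a measure \<Rightarrow> real" where
  "JS N M = (KL_divergence (exp 1) (mix M N) N + KL_divergence (exp 1) (mix M N) M) / 2"

text \<open>|a - b| on extended reals, with |(-inf) - (-inf)| = 0.\<close>
definition eabsdiff :: "ereal \<Rightarrow> ereal \<Rightarrow> ereal" where
  "eabsdiff a b = (if a = b then 0 else \<bar>a - b\<bar>)"

end

theory Submission
  imports Defs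
begin


lemma unit_cube_sets[measurable]: "unit_cube \<in> sets (borel::'a::euclidean_space measure)"
  unfolding unit_cube_def by simp

lemma space_lam[simp]: "space (lam::'a::euclidean_space measure) = unit_cube"
  unfolding lam_def by (simp add: space_restrict_space)

lemma emeasure_lam_space: "emeasure (lam::'a::euclidean_space measure) (space lam) = 1"
proof -
  have "emeasure (lam::'a measure) (space lam) = emeasure lborel (unit_cube::'a set)"
    unfolding lam_def by (subst emeasure_restrict_space) (auto simp: space_restrict_space)
  also have "\<dots> = 1" unfolding unit_cube_def
    by (simp add: emeasure_lborel_cbox_eq inner_Basis)
  finally show ?thesis .
qed

lemma prob_lam: "prob_space (lam::'a::euclidean_space measure)"
  by (rule prob_spaceI) (rule emeasure_lam_space)

lemma nlog_meas[measurable]: "nlog \<in> borel_measurable borel"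
  unfolding nlog_def by measurable

lemma gen_density_meas[measurable]: "gen_density G \<in> borel_measurable borel"
  proof -
  have "RN_deriv lborel (distr lam lborel G) \<in> borel_measurable borel"
    using borel_measurable_RN_deriv[of lborel "distr lam lborel G"] by simp
  then show ?thesis unfolding gen_density_def by measurable
qed

lemma gen_density_nonneg: "0 \<le> gen_density G x"
  unfolding gen_density_def by simp

lemma DG_meas[measurable]: assumes [measurable]: "p \<in> borel_measurable borel" shows "DG p G \<in> borel_measurable borel"
  unfolding DG_def by measurable

lemma distr_density:
  fixes G :: "'a::euclidean_space \<Rightarrow> 'a"
  assumes G: "G \<in> lam \<rightarrow>\<^sub>M lborel" and ac: "absolutely_continuous lborel (distr lam lborel G)"
  shows "distr lam lborel G = density lborel (\<lambda>x. ennreal (gen_density G x))"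
proof -
  let ?N = "distr lam lborel G"
  interpret N: prob_space ?N by (rule prob_space.prob_space_distr[OF prob_lam G])
  have sf: "sigma_finite_measure ?N" by unfold_locales
  have sets: "sets ?N = sets lborel" by simp
  have "density lborel (RN_deriv lborel ?N) = ?N"
    by (rule sigma_finite_measure.density_RN_deriv[OF sigma_finite_lborel ac sets])
  moreover have "density lborel (RN_deriv lborel ?N) = density lborel (\<lambda>x. ennreal (gen_density G x))"
    apply (rule density_cong)
      apply simp
     apply (simp add: gen_density_def)
    using sigma_finite_measure.RN_deriv_finite[OF sigma_finite_lborel sf ac sets]
    by eventually_elim (auto simp: gen_density_def ennreal_enn2real_if less_top)
  ultimately show ?thesis by simp
qed



definition aa :: "real \<Rightarrow> real \<Rightarrow> real" where
  "aa p q = p * - ln (p / (p + q))"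

lemma aa_nonneg: assumes "0 \<le> p" "0 \<le> q" shows "0 \<le> aa p q"
proof (cases "p = 0")
  case True then show ?thesis by (simp add: aa_def)
next
  case False
  then have "0 < p" using assms by simp
  then have "p / (p + q) \<le> 1" "0 < p / (p+q)" using assms by auto
  then have "ln (p / (p+q)) \<le> 0" by simp
  then show ?thesis unfolding aa_def using assms by (simp add: mult_nonneg_nonpos)
qed

lemma aa_le: assumes "0 \<le> p" "0 \<le> q" shows "aa p q \<le> q"
proof (cases "p = 0")
  case True then show ?thesis using assms by (simp add: aa_def)
next
  case False
  then have p: "0 < p" using assms by simp
  have "- ln (p / (p + q)) = ln ((p + q) / p)" using p assms by (simp add: ln_div)
  also have "\<dots> \<le> (p + q) / p - 1" using p assms by (intro ln_le_minus_one) auto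
  also have "\<dots> = q / p" using p by (simp add: field_simps)
  finally have "p * - ln (p / (p + q)) \<le> p * (q / p)" using p by (intro mult_left_mono) auto
  then show ?thesis using p by (simp add: aa_def)
qed

lemma aa_ln2: assumes "0 \<le> p" "0 \<le> q"
  shows "p * ln (p / ((p + q) / 2)) = p * ln 2 - aa p q"
proof (cases "p = 0")
  case True then show ?thesis by (simp add: aa_def)
next
  case False
  then have p: "0 < p" using assms by simp
  have e: "p / ((p + q) / 2) = 2 * (p / (p + q))" by (simp add: field_simps)
  have "ln (2 * (p / (p + q))) = ln 2 + ln (p / (p + q))"
    using p assms by (intro ln_mult_pos) auto
  then have "ln (p / ((p + q) / 2)) = ln 2 + ln (p / (p + q))" unfolding e .
  then show ?thesis unfolding aa_def by (simp add: algebra_simps)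
qed

lemma gibbs_real:
  assumes p: "0 \<le> p" and q: "0 \<le> q" and d: "0 < d" "d < 1"
  shows "aa p q + aa q p \<le> p * - ln d + q * - ln (1 - d)"
proof -
  have A: "aa p q \<le> p * - ln d + (d * (p + q) - p)"
  proof (cases "p = 0")
    case True then show ?thesis using q d by (simp add: aa_def)
  next
    case False
    then have p': "0 < p" using p by simp
    have "ln (d * (p + q) / p) \<le> d * (p + q) / p - 1"
      using p' q d by (intro ln_le_minus_one) auto
    moreover have "ln (d * (p + q) / p) = ln d - ln (p / (p + q))"
      using p' q d by (simp add: ln_div ln_mult)
    ultimately have "ln d - ln (p / (p + q)) \<le> d * (p + q) / p - 1" by simp
    then have "p * (ln d - ln (p / (p + q))) \<le> p * (d * (p + q) / p - 1)"
      using p' by (intro mult_left_mono) auto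
    also have "\<dots> = d * (p + q) - p" using p' by (simp add: field_simps)
    finally show ?thesis unfolding aa_def by (simp add: algebra_simps)
  qed
  have B: "aa q p \<le> q * - ln (1 - d) + ((1 - d) * (q + p) - q)"
  proof (cases "q = 0")
    case True then show ?thesis using p d by (simp add: aa_def)
  next
    case False
    then have q': "0 < q" using q by simp
    have "ln ((1 - d) * (q + p) / q) \<le> (1 - d) * (q + p) / q - 1"
      using p q' d by (intro ln_le_minus_one) auto
    moreover have "ln ((1 - d) * (q + p) / q) = ln (1 - d) - ln (q / (q + p))"
      using p q' d by (simp add: ln_div ln_mult)
    ultimately have "ln (1 - d) - ln (q / (q + p)) \<le> (1 - d) * (q + p) / q - 1" by simp
    then have "q * (ln (1 - d) - ln (q / (q + p))) \<le> q * ((1 - d) * (q + p) / q - 1)"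
      using q' by (intro mult_left_mono) auto
    also have "\<dots> = (1 - d) * (q + p) - q" using q' by (simp add: field_simps)
    finally show ?thesis unfolding aa_def by (simp add: algebra_simps)
  qed
  have "(d * (p + q) - p) + ((1 - d) * (q + p) - q) = 0" by (simp add: algebra_simps)
  with A B show ?thesis by linarith
qed

lemma nlog_pos: "0 < x \<Longrightarrow> nlog x = ennreal (- ln x)"
  by (simp add: nlog_def)

lemma gibbs_enn:
  assumes p: "0 \<le> p" and q: "0 \<le> q" and d: "0 \<le> d" "d \<le> 1"
  shows "ennreal (aa p q) + ennreal (aa q p) \<le> ennreal p * nlog d + ennreal q * nlog (1 - d)"
proof -
  consider "d = 0" | "d = 1" | "0 < d \<and> d < 1" using d by linarith
  then show ?thesis
  proof cases
    case 1
    show ?thesis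
    proof (cases "p = 0")
      case True
      then show ?thesis using q by (simp add: aa_def 1 nlog_def)
    next
      case False
      then have "ennreal p * nlog d = \<infinity>" using p 1 by (simp add: nlog_def ennreal_mult_top)
      then show ?thesis by simp
    qed
  next
    case 2
    show ?thesis
    proof (cases "q = 0")
      case True
      then show ?thesis using p by (simp add: aa_def 2 nlog_def)
    next
      case False
      then have "ennreal q * nlog (1 - d) = \<infinity>" using q 2 by (simp add: nlog_def ennreal_mult_top)
      then show ?thesis by simp
    qed
  next
    case 3
    have l1: "0 \<le> - ln d" using 3 by simp
    have l2: "0 \<le> - ln (1 - d)" using 3 by simp
    have "ennreal (aa p q) + ennreal (aa q p) = ennreal (aa p q + aa q p)"
      using aa_nonneg p q by (simp add: ennreal_plus)
    also have "\<dots> \<le> ennreal (p * - ln d + q * - ln (1 - d))"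
      using gibbs_real[OF p q] 3 by (intro ennreal_leI) auto
    also have "\<dots> = ennreal (p * - ln d) + ennreal (q * - ln (1 - d))"
      using p q l1 l2 by (intro ennreal_plus) (auto simp: mult_nonneg_nonpos)
    also have "\<dots> = ennreal p * nlog d + ennreal q * nlog (1 - d)"
    proof -
      have n1: "nlog d = ennreal (- ln d)" using 3 by (simp add: nlog_pos)
      have n2: "nlog (1 - d) = ennreal (- ln (1 - d))" using 3 by (simp add: nlog_pos)
      show ?thesis unfolding n1 n2 using p q l1 l2 by (simp only: ennreal_mult)
    qed
    finally show ?thesis .
  qed
qed



context
  fixes p :: "'a::euclidean_space \<Rightarrow> real" and G :: "'a \<Rightarrow> 'a"
  assumes p_meas[measurable]: "p \<in> borel_measurable borel"
    and p_pos: "\<And>x. x \<in> unit_cube \<Longrightarrow> p x > 0"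
    and p_zero: "\<And>x. x \<notin> unit_cube \<Longrightarrow> p x = 0"
    and mu_prob: "prob_space (density lborel (\<lambda>x. ennreal (p x)))"
    and G_meas[measurable]: "G \<in> lam \<rightarrow>\<^sub>M lborel"
    and G_ac: "absolutely_continuous lborel (distr lam lborel G)"
begin

lemma p_nonneg: "0 \<le> p x"
  using p_pos[of x] p_zero[of x] by (cases "x \<in> unit_cube") auto

lemma nn_p: "(\<integral>\<^sup>+x. ennreal (p x) \<partial>lborel) = 1"
proof -
  have "emeasure (density lborel (\<lambda>x. ennreal (p x))) (space (density lborel (\<lambda>x. ennreal (p x)))) = 1"
    using prob_space.emeasure_space_1[OF mu_prob] .
  then show ?thesis by (simp add: emeasure_density)
qed

lemma nn_q: "(\<integral>\<^sup>+x. ennreal (gen_density G x) \<partial>lborel) = 1"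
proof -
  have "emeasure (distr lam lborel G) UNIV = emeasure lam (G -` UNIV \<inter> space lam)"
    by (rule emeasure_distr[OF G_meas]) auto
  also have "\<dots> = 1" using emeasure_lam_space by simp
  finally have "emeasure (density lborel (\<lambda>x. ennreal (gen_density G x))) UNIV = 1"
    using distr_density[OF G_meas G_ac] by simp
  then show ?thesis by (simp add: emeasure_density)
qed

lemma int_p: "integrable lborel p"
  by (rule integrableI_nn_integral_finite[where x=1]) (auto simp: p_nonneg nn_p)

lemma int_q: "integrable lborel (gen_density G)"
  by (rule integrableI_nn_integral_finite[where x=1]) (auto simp: gen_density_nonneg nn_q)

lemma integral_p: "integral\<^sup>L lborel p = 1"
  using nn_integral_eq_integral[OF int_p] nn_p p_nonneg by simp

lemma integral_q: "integral\<^sup>L lborel (gen_density G) = 1"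
proof -
  have "ennreal (integral\<^sup>L lborel (gen_density G)) = 1"
    using nn_integral_eq_integral[OF int_q AE_I2[OF gen_density_nonneg]] nn_q by simp
  moreover have "0 \<le> integral\<^sup>L lborel (gen_density G)"
    by (rule integral_nonneg_AE) (simp add: gen_density_nonneg)
  ultimately show ?thesis by simp
qed

lemma mix_eq: "mix (distr lam lborel G) (density lborel (\<lambda>x. ennreal (p x)))
   = density lborel (\<lambda>x. ennreal ((p x + gen_density G x) / 2))"
proof -
  let ?q = "gen_density G"
  let ?\<nu> = "density lborel (\<lambda>x. ennreal (?q x))"
  let ?\<mu> = "density lborel (\<lambda>x. ennreal (p x))"
  let ?\<rho> = "density lborel (\<lambda>x. ennreal ((p x + ?q x) / 2))"
  have eq: "emeasure ?\<rho> A = (emeasure ?\<nu> A + emeasure ?\<mu> A) / 2" if A: "A \<in> sets lborel" for A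
  proof -
    have A'[measurable]: "A \<in> sets borel" using A by simp
    have pt: "ennreal ((p x + ?q x) / 2) * indicator A x
       = (ennreal (?q x) * indicator A x + ennreal (p x) * indicator A x) / 2" for x
    proof -
      have "ennreal ((p x + ?q x) / 2) = ennreal (?q x + p x) / ennreal 2"
        using p_nonneg[of x] gen_density_nonneg[of G x]
        by (subst divide_ennreal) (auto simp: add.commute)
      also have "\<dots> = (ennreal (?q x) + ennreal (p x)) / 2"
        using p_nonneg[of x] gen_density_nonneg[of G x] by (simp add: ennreal_plus)
      finally have e: "ennreal ((p x + ?q x) / 2) = (ennreal (?q x) + ennreal (p x)) / 2" .
      have "ennreal ((p x + ?q x) / 2) * indicator A x = indicator A x * ((ennreal (?q x) + ennreal (p x)) / 2)"
        unfolding e by (rule mult.commute)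
      also have "\<dots> = (indicator A x * (ennreal (?q x) + ennreal (p x))) / 2"
        by (rule ennreal_times_divide)
      also have "\<dots> = (ennreal (?q x) * indicator A x + ennreal (p x) * indicator A x) / 2"
        by (simp only: distrib_left mult.commute)
      finally show ?thesis .
    qed
    have "emeasure ?\<rho> A = (\<integral>\<^sup>+x. (ennreal (?q x) * indicator A x + ennreal (p x) * indicator A x) / 2 \<partial>lborel)"
      using A by (simp add: emeasure_density pt)
    also have "\<dots> = (\<integral>\<^sup>+x. (ennreal (?q x) * indicator A x + ennreal (p x) * indicator A x) \<partial>lborel) / 2"
      by (intro nn_integral_divide) measurable
    also have "\<dots> = (emeasure ?\<nu> A + emeasure ?\<mu> A) / 2"
      using A by (simp add: emeasure_density nn_integral_add)
    finally show ?thesis .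
  qed
  have "mix (distr lam lborel G) ?\<mu> = mix ?\<nu> ?\<mu>"
    using distr_density[OF G_meas G_ac] by simp
  also have "\<dots> = measure_of UNIV (sets lborel) (\<lambda>A. (emeasure ?\<nu> A + emeasure ?\<mu> A) / 2)"
    unfolding mix_def by simp
  also have "\<dots> = measure_of UNIV (sets lborel) (emeasure ?\<rho>)"
  proof (rule measure_of_eq)
    show "sets lborel \<subseteq> Pow UNIV" by simp
    fix a :: "'a set" assume "a \<in> sigma_sets UNIV (sets lborel)"
    moreover have "sigma_sets UNIV (sets lborel) = sets (lborel::'a measure)"
      using sets.sigma_sets_eq[of "lborel::'a measure"] by (simp only: space_lborel space_borel)
    ultimately have "a \<in> sets lborel" by simp
    then show "(emeasure ?\<nu> a + emeasure ?\<mu> a) / 2 = emeasure ?\<rho> a" using eq by simp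
  qed
  also have "\<dots> = ?\<rho>"
    using measure_of_of_measure[of ?\<rho>] by simp
  finally show ?thesis .
qed


lemma aa_meas[measurable]:
  assumes [measurable]: "f \<in> borel_measurable M" "g \<in> borel_measurable M"
  shows "(\<lambda>x. aa (f x) (g x)) \<in> borel_measurable M"
  unfolding aa_def by measurable

lemma int_aa1: "integrable lborel (\<lambda>x. aa (p x) (gen_density G x))"
  by (rule Bochner_Integration.integrable_bound[OF int_q])
     (auto simp: aa_nonneg aa_le p_nonneg gen_density_nonneg)

lemma int_aa2: "integrable lborel (\<lambda>x. aa (gen_density G x) (p x))"
  by (rule Bochner_Integration.integrable_bound[OF int_p])
     (auto simp: aa_nonneg aa_le p_nonneg gen_density_nonneg)

lemma log_exp1: "log (exp 1) y = ln y"
  by (simp add: log_def)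

lemma KL1: "KL_divergence (exp 1) (density lborel (\<lambda>x. ennreal ((p x + gen_density G x) / 2)))
    (density lborel (\<lambda>x. ennreal (p x))) = ln 2 - (\<integral>x. aa (p x) (gen_density G x) \<partial>lborel)"
proof -
  have "KL_divergence (exp 1) (density lborel (\<lambda>x. ennreal ((p x + gen_density G x) / 2)))
    (density lborel (\<lambda>x. ennreal (p x))) = (\<integral>x. p x * log (exp 1) (p x / ((p x + gen_density G x) / 2)) \<partial>lborel)"
    by (rule sigma_finite_measure.KL_density_density[OF sigma_finite_lborel])
       (auto simp: p_nonneg gen_density_nonneg add_nonneg_eq_0_iff)
  also have "\<dots> = (\<integral>x. p x * ln 2 - aa (p x) (gen_density G x) \<partial>lborel)"
    by (intro Bochner_Integration.integral_cong refl)
       (simp only: log_exp1 aa_ln2[OF p_nonneg gen_density_nonneg])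
  also have "\<dots> = (\<integral>x. p x * ln 2 \<partial>lborel) - (\<integral>x. aa (p x) (gen_density G x) \<partial>lborel)"
    by (rule Bochner_Integration.integral_diff) (auto intro: int_aa1 int_p)
  also have "(\<integral>x. p x * ln 2 \<partial>lborel) = ln 2"
    using integral_p by simp
  finally show ?thesis .
qed

lemma KL2: "KL_divergence (exp 1) (density lborel (\<lambda>x. ennreal ((p x + gen_density G x) / 2)))
    (density lborel (\<lambda>x. ennreal (gen_density G x))) = ln 2 - (\<integral>x. aa (gen_density G x) (p x) \<partial>lborel)"
proof -
  have "KL_divergence (exp 1) (density lborel (\<lambda>x. ennreal ((p x + gen_density G x) / 2)))
    (density lborel (\<lambda>x. ennreal (gen_density G x))) = (\<integral>x. gen_density G x * log (exp 1) (gen_density G x / ((p x + gen_density G x) / 2)) \<partial>lborel)"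
    by (rule sigma_finite_measure.KL_density_density[OF sigma_finite_lborel])
       (auto simp: p_nonneg gen_density_nonneg add_nonneg_eq_0_iff)
  also have "\<dots> = (\<integral>x. gen_density G x * ln 2 - aa (gen_density G x) (p x) \<partial>lborel)"
    by (intro Bochner_Integration.integral_cong refl)
       (metis log_exp1 aa_ln2 gen_density_nonneg p_nonneg add.commute)
  also have "\<dots> = (\<integral>x. gen_density G x * ln 2 \<partial>lborel) - (\<integral>x. aa (gen_density G x) (p x) \<partial>lborel)"
    by (rule Bochner_Integration.integral_diff) (auto intro: int_aa2 int_q)
  also have "(\<integral>x. gen_density G x * ln 2 \<partial>lborel) = ln 2"
    using integral_q by simp
  finally show ?thesis .
qed

lemma JS_eq: "JS (density lborel (\<lambda>x. ennreal (p x))) (distr lam lborel G)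
   = ln 2 - ((\<integral>x. aa (p x) (gen_density G x) \<partial>lborel) + (\<integral>x. aa (gen_density G x) (p x) \<partial>lborel)) / 2"
proof -
  have "JS (density lborel (\<lambda>x. ennreal (p x))) (distr lam lborel G) =
     (KL_divergence (exp 1) (density lborel (\<lambda>x. ennreal ((p x + gen_density G x) / 2))) (density lborel (\<lambda>x. ennreal (p x)))
    + KL_divergence (exp 1) (density lborel (\<lambda>x. ennreal ((p x + gen_density G x) / 2))) (density lborel (\<lambda>x. ennreal (gen_density G x)))) / 2"
    unfolding JS_def mix_eq using distr_density[OF G_meas G_ac] by simp
  then show ?thesis unfolding KL1 KL2 by (simp add: field_simps)
qed


lemma I_sum:
  assumes D[measurable]: "D \<in> borel_measurable borel"
  shows "(\<integral>\<^sup>+ y. nlog (D y) \<partial>density lborel (\<lambda>x. ennreal (p x)))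
       + (\<integral>\<^sup>+ z. nlog (1 - D (G z)) \<partial>lam)
     = (\<integral>\<^sup>+ x. ennreal (p x) * nlog (D x) + ennreal (gen_density G x) * nlog (1 - D x) \<partial>lborel)"
proof -
  have 1: "(\<integral>\<^sup>+ y. nlog (D y) \<partial>density lborel (\<lambda>x. ennreal (p x)))
      = (\<integral>\<^sup>+ x. ennreal (p x) * nlog (D x) \<partial>lborel)"
    by (rule nn_integral_density) measurable
  have "(\<integral>\<^sup>+ z. nlog (1 - D (G z)) \<partial>lam) = (\<integral>\<^sup>+ x. nlog (1 - D x) \<partial>distr lam lborel G)"
    by (rule nn_integral_distr[symmetric, OF G_meas]) simp
  also have "\<dots> = (\<integral>\<^sup>+ x. ennreal (gen_density G x) * nlog (1 - D x) \<partial>lborel)"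
    unfolding distr_density[OF G_meas G_ac]
    by (rule nn_integral_density) measurable
  finally have 2: "(\<integral>\<^sup>+ z. nlog (1 - D (G z)) \<partial>lam) = (\<integral>\<^sup>+ x. ennreal (gen_density G x) * nlog (1 - D x) \<partial>lborel)" .
  show ?thesis unfolding 1 2
    by (rule nn_integral_add[symmetric]) measurable
qed

lemma DG_pt1: "ennreal (p x) * nlog (DG p G x) = ennreal (aa (p x) (gen_density G x))"
proof (cases "x \<in> unit_cube")
  case True
  have p: "0 < p x" using p_pos True by simp
  have q: "0 \<le> gen_density G x" by (rule gen_density_nonneg)
  have le: "p x / (p x + gen_density G x) \<le> 1" "0 < p x / (p x + gen_density G x)" using p q by auto
  then have n: "0 \<le> - ln (p x / (p x + gen_density G x))" by simp
  have "nlog (DG p G x) = ennreal (- ln (p x / (p x + gen_density G x)))"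
    using True le by (simp add: DG_def nlog_pos)
  then show ?thesis unfolding aa_def using p n by (simp only: ennreal_mult[symmetric] less_imp_le)
next
  case False
  then show ?thesis using p_zero[OF False] by (simp add: aa_def)
qed

lemma DG_pt2: "ennreal (gen_density G x) * nlog (1 - DG p G x) = ennreal (aa (gen_density G x) (p x))"
proof (cases "gen_density G x = 0")
  case True
  then show ?thesis by (simp add: aa_def)
next
  case False
  then have q: "0 < gen_density G x" using gen_density_nonneg[of G x] by simp
  have p: "0 \<le> p x" by (rule p_nonneg)
  have le: "gen_density G x / (gen_density G x + p x) \<le> 1" "0 < gen_density G x / (gen_density G x + p x)"
    using p q by auto
  then have n: "0 \<le> - ln (gen_density G x / (gen_density G x + p x))" by simp
  have "1 - DG p G x = gen_density G x / (gen_density G x + p x)"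
  proof (cases "x \<in> unit_cube")
    case True
    then show ?thesis using p q by (simp add: DG_def field_simps)
  next
    case False
    then show ?thesis using p_zero[OF False] q by (simp add: DG_def)
  qed
  then have "nlog (1 - DG p G x) = ennreal (- ln (gen_density G x / (gen_density G x + p x)))"
    using le by (simp add: nlog_pos)
  then show ?thesis unfolding aa_def using q n by (simp only: ennreal_mult[symmetric] less_imp_le)
qed

lemma I_DG:
  "(\<integral>\<^sup>+ y. nlog (DG p G y) \<partial>density lborel (\<lambda>x. ennreal (p x)))
       + (\<integral>\<^sup>+ z. nlog (1 - DG p G (G z)) \<partial>lam)
   = ennreal ((\<integral>x. aa (p x) (gen_density G x) \<partial>lborel) + (\<integral>x. aa (gen_density G x) (p x) \<partial>lborel))"
proof -
  have "(\<integral>\<^sup>+ y. nlog (DG p G y) \<partial>density lborel (\<lambda>x. ennreal (p x)))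
       + (\<integral>\<^sup>+ z. nlog (1 - DG p G (G z)) \<partial>lam)
     = (\<integral>\<^sup>+ x. ennreal (aa (p x) (gen_density G x)) + ennreal (aa (gen_density G x) (p x)) \<partial>lborel)"
    unfolding I_sum[OF DG_meas[OF p_meas]] DG_pt1 DG_pt2 ..
  also have "\<dots> = (\<integral>\<^sup>+ x. ennreal (aa (p x) (gen_density G x)) \<partial>lborel)
       + (\<integral>\<^sup>+ x. ennreal (aa (gen_density G x) (p x)) \<partial>lborel)"
    by (rule nn_integral_add) measurable
  also have "\<dots> = ennreal (\<integral>x. aa (p x) (gen_density G x) \<partial>lborel) + ennreal (\<integral>x. aa (gen_density G x) (p x) \<partial>lborel)"
    by (simp add: nn_integral_eq_integral int_aa1 int_aa2 aa_nonneg p_nonneg gen_density_nonneg)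
  also have "\<dots> = ennreal ((\<integral>x. aa (p x) (gen_density G x) \<partial>lborel) + (\<integral>x. aa (gen_density G x) (p x) \<partial>lborel))"
    by (rule ennreal_plus[symmetric])
       (auto intro!: integral_nonneg_AE simp: aa_nonneg p_nonneg gen_density_nonneg)
  finally show ?thesis .
qed

lemma I_opt:
  assumes D[measurable]: "D \<in> borel_measurable borel" and Dr: "\<And>x. 0 \<le> D x \<and> D x \<le> 1"
  shows "(\<integral>\<^sup>+ y. nlog (DG p G y) \<partial>density lborel (\<lambda>x. ennreal (p x)))
       + (\<integral>\<^sup>+ z. nlog (1 - DG p G (G z)) \<partial>lam)
    \<le> (\<integral>\<^sup>+ y. nlog (D y) \<partial>density lborel (\<lambda>x. ennreal (p x)))
       + (\<integral>\<^sup>+ z. nlog (1 - D (G z)) \<partial>lam)"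
  unfolding I_sum[OF DG_meas[OF p_meas]] I_sum[OF D] DG_pt1 DG_pt2
  by (rule nn_integral_mono) (simp add: gibbs_enn p_nonneg gen_density_nonneg Dr)

lemma Lpop_DG: "Lpop (density lborel (\<lambda>x. ennreal (p x))) G (DG p G)
   = ereal (JS (density lborel (\<lambda>x. ennreal (p x))) (distr lam lborel G) - ln 2)"
proof -
  have nn: "0 \<le> (\<integral>x. aa (p x) (gen_density G x) \<partial>lborel) + (\<integral>x. aa (gen_density G x) (p x) \<partial>lborel)"
    by (auto intro!: add_nonneg_nonneg integral_nonneg_AE simp: aa_nonneg p_nonneg gen_density_nonneg)
  show ?thesis
    unfolding Lpop_def I_DG JS_eq using nn by simp
qed

lemma Lpop_opt:
  assumes D[measurable]: "D \<in> borel_measurable borel" and Dr: "\<And>x. 0 \<le> D x \<and> D x \<le> 1"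
  shows "Lpop (density lborel (\<lambda>x. ennreal (p x))) G D \<le> Lpop (density lborel (\<lambda>x. ennreal (p x))) G (DG p G)"
proof -
  have "enn2ereal ((\<integral>\<^sup>+ y. nlog (DG p G y) \<partial>density lborel (\<lambda>x. ennreal (p x)))
       + (\<integral>\<^sup>+ z. nlog (1 - DG p G (G z)) \<partial>lam))
    \<le> enn2ereal ((\<integral>\<^sup>+ y. nlog (D y) \<partial>density lborel (\<lambda>x. ennreal (p x)))
       + (\<integral>\<^sup>+ z. nlog (1 - D (G z)) \<partial>lam))"
    using I_opt[OF D Dr] by (simp add: less_eq_ennreal.rep_eq)
  then have "ereal (1/2) * enn2ereal ((\<integral>\<^sup>+ y. nlog (DG p G y) \<partial>density lborel (\<lambda>x. ennreal (p x)))
       + (\<integral>\<^sup>+ z. nlog (1 - DG p G (G z)) \<partial>lam))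
    \<le> ereal (1/2) * enn2ereal ((\<integral>\<^sup>+ y. nlog (D y) \<partial>density lborel (\<lambda>x. ennreal (p x)))
       + (\<integral>\<^sup>+ z. nlog (1 - D (G z)) \<partial>lam))"
    by (rule ereal_mult_left_mono) auto
  then show ?thesis unfolding Lpop_def ereal_mult_minus_left ereal_minus_le_minus .
qed

end


lemma ereal_diff_nonneg: "(y::ereal) \<le> x \<Longrightarrow> 0 \<le> x - y"
  by (cases x; cases y) auto

lemma eabsdiff_bound:
  fixes a b :: ereal and s :: real
  assumes "eabsdiff a b \<le> ereal s" "0 \<le> s"
  shows "a \<le> b + ereal s" "b \<le> a + ereal s"
proof -
  have "a \<le> b + ereal s \<and> b \<le> a + ereal s"
  proof (cases "a = b")
    case True then show ?thesis using assms(2) by (cases a) auto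
  next
    case False
    then have "\<bar>a - b\<bar> \<le> ereal s" using assms(1) by (simp add: eabsdiff_def)
    with False show ?thesis by (cases a; cases b) auto
  qed
  then show "a \<le> b + ereal s" "b \<le> a + ereal s" by auto
qed

lemma algebra_main:
  fixes Lp Le :: "'g \<Rightarrow> 'd \<Rightarrow> ereal" and J :: "'g \<Rightarrow> real" and Hg :: "'g set" and Hd :: "'d set"
  assumes g0: "g0 \<in> Hg"
    and opt: "\<And>G D. G \<in> Hg \<Longrightarrow> D \<in> Hd \<Longrightarrow> Lp G D \<le> ereal (J G - ln 2)"
  shows "ereal (J g0) \<le> ((SUP D\<in>Hd. Le g0 D) - (INF G\<in>Hg. SUP D\<in>Hd. Le G D))
      + (SUP G\<in>Hg. ereal (J G - ln 2) - (SUP D\<in>Hd. Lp G D))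
      + 2 * (SUP GD\<in>Hg \<times> Hd. eabsdiff (Lp (fst GD) (snd GD)) (Le (fst GD) (snd GD)))
      + (INF G\<in>Hg. ereal (J G))"
proof -
  define U where "U G = (SUP D\<in>Hd. Le G D)" for G
  define V where "V G = (SUP D\<in>Hd. Lp G D)" for G
  define I where "I = (INF G\<in>Hg. U G)"
  define T where "T = U g0 - I"
  define Dl where "Dl = (SUP G\<in>Hg. ereal (J G - ln 2) - V G)"
  define S where "S = (SUP GD\<in>Hg \<times> Hd. eabsdiff (Lp (fst GD) (snd GD)) (Le (fst GD) (snd GD)))"
  define Gm where "Gm = (INF G\<in>Hg. ereal (J G))"
  define X where "X = T + Dl + 2 * S"
  have T0: "0 \<le> T" unfolding T_def I_def
    by (rule ereal_diff_nonneg) (rule INF_lower[OF g0])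
  have V_le: "V G \<le> ereal (J G - ln 2)" if "G \<in> Hg" for G
    unfolding V_def using opt[OF that] by (rule SUP_least)
  have D0: "0 \<le> Dl"
  proof -
    have "0 \<le> ereal (J g0 - ln 2) - V g0" by (rule ereal_diff_nonneg) (rule V_le[OF g0])
    also have "\<dots> \<le> Dl" unfolding Dl_def using g0 by (rule SUP_upper2) simp
    finally show ?thesis .
  qed
  have Tinf: "T = \<infinity>" if "Hd = {}"
  proof -
    have "Hg \<noteq> {}" using g0 by auto
    with that show ?thesis by (simp add: T_def U_def I_def INF_const bot_ereal_def)
  qed
  have Snn: "0 \<le> S" if ne: "Hd \<noteq> {}"
  proof -
    obtain d0 where d0: "d0 \<in> Hd" using ne by auto
    show ?thesis unfolding S_def
      by (rule SUP_upper2[of "(g0, d0)"]) (auto simp: g0 d0 eabsdiff_def)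
  qed
  have main: "ereal (J g0) \<le> X + ereal (J G)" if G: "G \<in> Hg" and Xf: "\<bar>X\<bar> \<noteq> \<infinity>" for G
  proof -
    have "Hd \<noteq> {}"
    proof
      assume "Hd = {}"
      moreover have "Hg \<noteq> {}" using g0 by auto
      ultimately have "T = \<infinity>" by (simp add: T_def U_def I_def INF_const bot_ereal_def)
      then show False using Xf T0 D0 by (simp add: X_def)
    qed
    then obtain d0 where d0: "d0 \<in> Hd" by auto
    have S0: "0 \<le> S" unfolding S_def
      by (rule SUP_upper2[of "(g0, d0)"]) (auto simp: g0 d0 eabsdiff_def)
    have Tf: "\<bar>T\<bar> \<noteq> \<infinity>" and Df: "\<bar>Dl\<bar> \<noteq> \<infinity>" and Sf: "\<bar>S\<bar> \<noteq> \<infinity>"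
      using Xf T0 D0 S0 unfolding X_def
      by (cases T; cases Dl; cases S; simp)+
    obtain t where t: "T = ereal t" using Tf by (cases T) auto
    obtain dl where dl: "Dl = ereal dl" using Df by (cases Dl) auto
    obtain s where s: "S = ereal s" using Sf by (cases S) auto
    have s0: "0 \<le> s" using S0 s by simp
    have ab: "Lp G' D \<le> Le G' D + ereal s" "Le G' D \<le> Lp G' D + ereal s" if "G' \<in> Hg" "D \<in> Hd" for G' D
    proof -
      have "eabsdiff (Lp G' D) (Le G' D) \<le> ereal s"
        unfolding s[symmetric] S_def using that by (intro SUP_upper2[of "(G', D)"]) auto
      then show "Lp G' D \<le> Le G' D + ereal s" "Le G' D \<le> Lp G' D + ereal s"
        using eabsdiff_bound s0 by blast+
    qed
    have UV: "U G' \<le> V G' + ereal s" if "G' \<in> Hg" for G'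
      unfolding U_def
    proof (rule SUP_least)
      fix D assume "D \<in> Hd"
      then have "Le G' D \<le> Lp G' D + ereal s" using ab that by blast
      also have "\<dots> \<le> V G' + ereal s" unfolding V_def using \<open>D \<in> Hd\<close>
        by (intro add_right_mono SUP_upper)
      finally show "Le G' D \<le> V G' + ereal s" .
    qed
    have VU: "V g0 \<le> U g0 + ereal s"
      unfolding V_def
    proof (rule SUP_least)
      fix D assume "D \<in> Hd"
      then have "Lp g0 D \<le> Le g0 D + ereal s" using ab g0 by blast
      also have "\<dots> \<le> U g0 + ereal s" unfolding U_def using \<open>D \<in> Hd\<close>
        by (intro add_right_mono SUP_upper)
      finally show "Lp g0 D \<le> U g0 + ereal s" .
    qed
    have IU: "I \<le> U g0" unfolding I_def by (rule INF_lower[OF g0])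
    have "U g0 \<noteq> \<infinity>" "U g0 \<noteq> -\<infinity>" "I \<noteq> \<infinity>" "I \<noteq> -\<infinity>"
      using t IU unfolding T_def by (cases "U g0"; cases I; simp)+
    then obtain u i where u: "U g0 = ereal u" and i: "I = ereal i"
      by (cases "U g0"; cases I) auto
    have tui: "t = u - i" using t u i by (simp add: T_def)
    have "ereal (J g0 - ln 2) - V g0 \<le> Dl" unfolding Dl_def using g0 by (rule SUP_upper2) simp
    then have "V g0 \<noteq> -\<infinity>" using dl by auto
    moreover have "V g0 \<noteq> \<infinity>" using V_le[OF g0] by auto
    ultimately obtain v where v: "V g0 = ereal v" by (cases "V g0") auto
    have 1: "J g0 - ln 2 - v \<le> dl"
      using \<open>ereal (J g0 - ln 2) - V g0 \<le> Dl\<close> v dl by simp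
    have 2: "v \<le> u + s" using VU v u by simp
    have "I \<le> U G" unfolding I_def by (rule INF_lower[OF G])
    also have "\<dots> \<le> V G + ereal s" by (rule UV[OF G])
    also have "\<dots> \<le> ereal (J G - ln 2) + ereal s" by (intro add_right_mono V_le[OF G])
    finally have 3: "i \<le> J G - ln 2 + s" using i by simp
    have "J g0 \<le> (t + dl + 2 * s) + J G" using 1 2 3 tui by linarith
    moreover have "X = ereal (t + dl + 2 * s)" unfolding X_def t dl s by simp
    ultimately show ?thesis by simp
  qed
  have "ereal (J g0) \<le> X + Gm"
  proof (cases "\<bar>X\<bar> = \<infinity>")
    case True
    have "X = \<infinity>"
    proof (cases "Hd = {}")
      case True
      then show ?thesis using Tinf by (simp add: X_def)
    next
      case False
      then show ?thesis using Snn[OF False] \<open>\<bar>X\<bar> = \<infinity>\<close> T0 D0 unfolding X_def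
        by (cases T; cases Dl; cases S) auto
    qed
    then show ?thesis by simp
  next
    case False
    have "ereal (J g0) - X \<le> Gm" unfolding Gm_def
    proof (rule INF_greatest)
      fix G assume "G \<in> Hg"
      from main[OF this False] False show "ereal (J g0) - X \<le> ereal (J G)"
        by (simp add: ereal_minus_le add.commute)
    qed
    then show ?thesis using False by (simp add: ereal_minus_le add.commute)
  qed
  then show ?thesis unfolding X_def T_def Dl_def S_def Gm_def U_def V_def I_def .
qed

theorem proposition1:
  fixes M :: "'b measure"
    and p :: "'a::euclidean_space \<Rightarrow> real"
    and Ys Zs :: "nat \<Rightarrow> 'b \<Rightarrow> 'a"
    and Hgen :: "('a \<Rightarrow> 'a) set"
    and Hdis :: "('a \<Rightarrow> real) set"
    and Ghat :: "nat \<Rightarrow> 'b \<Rightarrow> ('a \<Rightarrow> 'a)"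
    and n :: nat
  assumes M: "prob_space M"
    and p_meas: "p \<in> borel_measurable borel"
    and p_pos: "\<And>x. x \<in> unit_cube \<Longrightarrow> p x > 0"
    and p_zero: "\<And>x. x \<notin> unit_cube \<Longrightarrow> p x = 0"
    and mu_prob: "prob_space (density lborel (\<lambda>x. ennreal (p x)))"
    and Ys_meas: "\<And>i. Ys i \<in> M \<rightarrow>\<^sub>M lborel"
    and Ys_cube: "\<And>i w. w \<in> space M \<Longrightarrow> Ys i w \<in> unit_cube"
    and Ys_law: "\<And>i. distr M lborel (Ys i) = density lborel (\<lambda>x. ennreal (p x))"
    and Ys_indep: "prob_space.indep_vars M (\<lambda>_. lborel) Ys UNIV"
    and Zs_meas: "\<And>i. Zs i \<in> M \<rightarrow>\<^sub>M lam"
    and Zs_law: "\<And>i. distr M lam (Zs i) = lam"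
    and Zs_indep: "prob_space.indep_vars M (\<lambda>_. lam) Zs UNIV"
    and Hgen_meas: "\<And>G. G \<in> Hgen \<Longrightarrow> G \<in> lam \<rightarrow>\<^sub>M lborel"
    and Hgen_ac: "\<And>G. G \<in> Hgen \<Longrightarrow> absolutely_continuous lborel (distr lam lborel G)"
    and Hdis_meas: "\<And>D. D \<in> Hdis \<Longrightarrow> D \<in> borel_measurable borel"
    and Hdis_range: "\<And>D x. D \<in> Hdis \<Longrightarrow> 0 \<le> D x \<and> D x \<le> 1"
    and Ghat_in: "\<And>k w. Ghat k w \<in> Hgen"
    and n_pos: "n \<ge> 1"
  shows "AE w in M.
    ereal (JS (density lborel (\<lambda>x. ennreal (p x))) (distr lam lborel (Ghat n w)))
    \<le> ((SUP D\<in>Hdis. Lemp Ys Zs n w (Ghat n w) D)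
          - (INF G\<in>Hgen. SUP D\<in>Hdis. Lemp Ys Zs n w G D))
      + (SUP G\<in>Hgen. Lpop (density lborel (\<lambda>x. ennreal (p x))) G (DG p G)
           - (SUP D\<in>Hdis. Lpop (density lborel (\<lambda>x. ennreal (p x))) G D))
      + 2 * (SUP GD\<in>Hgen \<times> Hdis.
               eabsdiff (Lpop (density lborel (\<lambda>x. ennreal (p x))) (fst GD) (snd GD))
                        (Lemp Ys Zs n w (fst GD) (snd GD)))
      + (INF G\<in>Hgen. ereal (JS (density lborel (\<lambda>x. ennreal (p x))) (distr lam lborel G)))"
  proof -
  let ?mu = "density lborel (\<lambda>x. ennreal (p x))"
  have JSG: "Lpop ?mu G (DG p G) = ereal (JS ?mu (distr lam lborel G) - ln 2)" if G: "G \<in> Hgen" for G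
    by (rule Lpop_DG[OF p_meas p_pos p_zero mu_prob Hgen_meas[OF G] Hgen_ac[OF G]])
  have opt: "Lpop ?mu G D \<le> ereal (JS ?mu (distr lam lborel G) - ln 2)" if G: "G \<in> Hgen" and D: "D \<in> Hdis" for G D
  proof -
    have "Lpop ?mu G D \<le> Lpop ?mu G (DG p G)"
      by (rule Lpop_opt[OF p_meas p_pos p_zero mu_prob Hgen_meas[OF G] Hgen_ac[OF G] Hdis_meas[OF D] Hdis_range[OF D]])
    then show ?thesis using JSG[OF G] by simp
  qed
  have eqS: "(SUP G\<in>Hgen. Lpop ?mu G (DG p G) - (SUP D\<in>Hdis. Lpop ?mu G D))
     = (SUP G\<in>Hgen. ereal (JS ?mu (distr lam lborel G) - ln 2) - (SUP D\<in>Hdis. Lpop ?mu G D))"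
    by (rule SUP_cong) (simp_all add: JSG)
  show ?thesis
  proof (rule AE_I2)
    fix w
    show "ereal (JS ?mu (distr lam lborel (Ghat n w)))
    \<le> ((SUP D\<in>Hdis. Lemp Ys Zs n w (Ghat n w) D)
          - (INF G\<in>Hgen. SUP D\<in>Hdis. Lemp Ys Zs n w G D))
      + (SUP G\<in>Hgen. Lpop ?mu G (DG p G)
           - (SUP D\<in>Hdis. Lpop ?mu G D))
      + 2 * (SUP GD\<in>Hgen \<times> Hdis.
               eabsdiff (Lpop ?mu (fst GD) (snd GD))
                        (Lemp Ys Zs n w (fst GD) (snd GD)))
      + (INF G\<in>Hgen. ereal (JS ?mu (distr lam lborel G)))"
      unfolding eqS
      by (rule algebra_main[where Lp = "\<lambda>G D. Lpop ?mu G D" and Le = "\<lambda>G D. Lemp Ys Zs n w G D"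
            and J = "\<lambda>G. JS ?mu (distr lam lborel G)", OF Ghat_in opt])
  qed
qed

end
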